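(* Let $\mathbf{f}=\{f_1,\dots,f_m\}$ be an $m$-objective problem ($m\ge 2$, not necessarily simple) whose Pareto front $\mathbf{f}X^*(\mathbf{f})\subseteq\mathbb{R}^m$ is a topological $(m-1)$-manifold (possibly with boundary). For each $i\in\{1,\dots,m\}$ let $\pi_{-i}:\mathbb{R}^m\to\mathbb{R}^{i-1}\times\{0\}\times\mathbb{R}^{m-i}\cong\mathbb{R}^{m-1}$, $(y_1,\dots,y_m)\mapsto(y_1,\dots,y_{i-1},0,y_{i+1},\dots,y_m)$. Then the restriction of $\pi_{-i}$ to $\operatorname{Int}\mathbf{f}X^*(\mathbf{f})$ is a topological embedding.
   Context: A problem is a finite set $\mathbf{f}=\{f_1,\dots,f_m\}$ of functions $f_i:\mathbb{R}^n\to\mathbb{R}$ together with a feasible region $X\subseteq\mathbb{R}^n$, to be minimized simultaneously; its evaluation map is $x\mapsto(f_1(x),\dots,f_m(x))$. The Pareto set $X^*(\mathbf{f})$ is the set of $x^*\in X$ for which there is no $x\in X$ with $f_i(x)\le f_i(x^* )$ for all $i$ and $f_j(x)<f_j(x^* )$ for some $j$; the Pareto front $\mathbf{f}X^*(\mathbf{f})$ is its image under the evaluation map, with the subspace topology of $\mathbb{R}^m$. For a topological manifold with boundary $M$, $\operatorname{Int}M$ denotes its manifold interior (points having an open neighborhood homeomorphic to Euclidean space) and $\partial M$ its manifold boundary. *)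

theory Defs
  imports "HOL-Analysis.Analysis"
begin

text \<open>A multi-objective problem: a finite family of objectives indexed by the finite
  type 'm (so m = CARD('m)), each a map real^'n \<Rightarrow> real, together with a feasible
  region X.\<close>

definition eval_map :: "('m::finite \<Rightarrow> real^'n \<Rightarrow> real) \<Rightarrow> real^'n \<Rightarrow> real^'m" where
  "eval_map f x = (\<chi> i. f i x)"

definition pareto_set :: "('m::finite \<Rightarrow> real^'n \<Rightarrow> real) \<Rightarrow> (real^'n) set \<Rightarrow> (real^'n) set" where
  "pareto_set f X = {xs \<in> X. \<not> (\<exists>x\<in>X. (\<forall>i. f i x \<le> f i xs) \<and> (\<exists>j. f j x < f j xs))}"

definition pareto_front :: "('m::finite \<Rightarrow> real^'n \<Rightarrow> real) \<Rightarrow> (real^'n) set \<Rightarrow> (real^'m) set" where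
  "pareto_front f X = eval_map f ` pareto_set f X"

text \<open>Topological k-manifold with boundary, for a subset M of a Euclidean space with the
  subspace topology (Hausdorff and second countable automatically).  The model space, a
  closed half-space of R^k, is realised as a closed half-space {y \<in> L. a \<bullet> y \<ge> 0} of a
  k-dimensional linear subspace L of the ambient space (linearly homeomorphic to the
  standard model R^(k-1) \<times> [0,\<infinity>)).\<close>

definition top_manifold_with_boundary :: "nat \<Rightarrow> 'a::euclidean_space set \<Rightarrow> bool" where
  "top_manifold_with_boundary k M \<longleftrightarrow>
     (\<forall>x\<in>M. \<exists>U. openin (top_of_set M) U \<and> x \<in> U \<and>
        (\<exists>(L::'a set) a V. subspace L \<and> dim L = k \<and> a \<in> L \<and> a \<noteq> 0 \<and>
                 openin (top_of_set {y \<in> L. a \<bullet> y \<ge> 0}) V \<and> U homeomorphic V))"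

definition manifold_interior :: "nat \<Rightarrow> 'a::euclidean_space set \<Rightarrow> 'a set" where
  "manifold_interior k M =
     {x \<in> M. \<exists>U. openin (top_of_set M) U \<and> x \<in> U \<and>
        (\<exists>L::'a set. subspace L \<and> dim L = k \<and> U homeomorphic L)}"

definition proj_minus :: "'m::finite \<Rightarrow> real^'m \<Rightarrow> real^'m" where
  "proj_minus i y = (\<chi> j. if j = i then 0 else y $ j)"

end

theory Submission
  imports Defs
begin

lemma proj_minus_linear: "linear (proj_minus i)"
  by (rule linearI) (auto simp: proj_minus_def vec_eq_iff)

lemma proj_minus_cont: "continuous_on S (proj_minus i)"
  by (simp add: linear_continuous_on linear_linear proj_minus_linear)

lemma proj_minus_hyper: "proj_minus i y \<in> {x. axis i 1 \<bullet> x = 0}"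
  by (simp add: proj_minus_def inner_commute[of "axis i 1"] inner_axis)

lemma proj_minus_inj:
  fixes f :: "'m::finite \<Rightarrow> real^'n \<Rightarrow> real"
  shows "inj_on (proj_minus i) (pareto_front f X)"
proof (rule inj_onI)
  fix x y assume x: "x \<in> pareto_front f X" and y: "y \<in> pareto_front f X"
    and e: "proj_minus i x = proj_minus i y"
  have oth: "x $ j = y $ j" if "j \<noteq> i" for j
  proof -
    have "proj_minus i x $ j = proj_minus i y $ j" using e by simp
    then show ?thesis using that by (simp add: proj_minus_def)
  qed
  have dom: False if H: "u \<in> pareto_front f X" "v \<in> pareto_front f X"
      "\<And>j. j \<noteq> i \<Longrightarrow> u $ j = v $ j" "u $ i < v $ i" for u v
  proof -
    obtain a where a: "a \<in> pareto_set f X" "u = eval_map f a"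
      using H(1) unfolding pareto_front_def by auto
    obtain b where b: "b \<in> pareto_set f X" "v = eval_map f b"
      using H(2) unfolding pareto_front_def by auto
    have "a \<in> X" using a unfolding pareto_set_def by auto
    moreover have "\<forall>j. f j a \<le> f j b"
    proof
      fix j
      have "u $ j \<le> v $ j" using H(3,4) by (cases "j = i") auto
      then show "f j a \<le> f j b" using a b by (simp add: eval_map_def)
    qed
    moreover have "f i a < f i b" using H(4) a b by (simp add: eval_map_def)
    ultimately show False using b(1) unfolding pareto_set_def by blast
  qed
  show "x = y"
  proof (rule ccontr)
    assume "x \<noteq> y"
    have "x $ i \<noteq> y $ i"
    proof
      assume "x $ i = y $ i"
      then have "\<forall>j. x $ j = y $ j" using oth by (metis (full_types))
      then show False using \<open>x \<noteq> y\<close> by (simp add: vec_eq_iff)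
    qed
    then consider "x $ i < y $ i" | "y $ i < x $ i" by linarith
    then show False
    proof cases
      case 1 then show False using dom[OF x y oth] by blast
    next
      case 2
      have "y $ j = x $ j" if "j \<noteq> i" for j using oth[OF that] by simp
      then show False using dom[OF y x] 2 by blast
    qed
  qed
qed

theorem lemma1:
  fixes f :: "'m::finite \<Rightarrow> real^'n \<Rightarrow> real"
    and X :: "(real^'n) set"
    and i :: 'm
  assumes "CARD('m) \<ge> 2"
    and "top_manifold_with_boundary (CARD('m) - 1) (pareto_front f X)"
  shows "\<exists>h. homeomorphism
               (manifold_interior (CARD('m) - 1) (pareto_front f X))
               (proj_minus i ` manifold_interior (CARD('m) - 1) (pareto_front f X))
               (proj_minus i) h"
proof -
  define M where "M = pareto_front f X"
  define k where "k = CARD('m) - 1"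
  define I where "I = manifold_interior k M"
  define p where "p = proj_minus i"
  define W where "W = {x::real^'m. axis i 1 \<bullet> x = 0}"
  have IM: "I \<subseteq> M" unfolding I_def manifold_interior_def by auto
  have injM: "inj_on p M" unfolding p_def M_def by (rule proj_minus_inj)
  have injI: "inj_on p I" using inj_on_subset[OF injM IM] .
  have subW: "subspace W" unfolding W_def by (rule subspace_hyperplane)
  have dimW: "dim W = k" unfolding W_def k_def
    by (subst dim_hyperplane) (auto simp: axis_eq_0_iff)
  have pW: "p x \<in> W" for x unfolding p_def W_def by (rule proj_minus_hyper)
  have oo: "openin (top_of_set (p ` I)) (p ` S)" if S: "openin (top_of_set I) S" for S
  proof (subst openin_subopen, intro ballI)
    fix y assume "y \<in> p ` S"
    then obtain x where xS: "x \<in> S" and yx: "y = p x" by auto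
    have SI: "S \<subseteq> I" using openin_imp_subset[OF S] by simp
    have "x \<in> I" using xS SI by auto
    then obtain U L where U: "openin (top_of_set M) U" "x \<in> U" and L: "subspace (L::(real^'m) set)" "dim L = k"
        "U homeomorphic L"
      unfolding I_def manifold_interior_def by blast
    have UI: "U \<subseteq> I"
    proof
      fix z assume zU: "z \<in> U"
      have zM: "z \<in> M" using openin_imp_subset[OF U(1)] zU by blast
      have "\<exists>U. openin (top_of_set M) U \<and> z \<in> U \<and> (\<exists>L::(real^'m) set. subspace L \<and> dim L = k \<and> U homeomorphic L)"
        apply (rule exI[where x=U])
        apply (intro conjI U(1) zU)
        apply (rule exI[where x=L])
        using L by (intro conjI)
      then show "z \<in> I" unfolding I_def manifold_interior_def mem_Collect_eq
        using zM by (rule conjI[rotated])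
    qed
    obtain h g where hg: "homeomorphism U L h g" using L(3) homeomorphic_def by blast
    have UIo: "openin (top_of_set I) U"
      using openin_subset_trans[OF U(1) UI IM] .
    define S' where "S' = S \<inter> U"
    have S'I: "openin (top_of_set I) S'"
      unfolding S'_def using openin_Int[OF S UIo] .
    have S'U: "S' \<subseteq> U" unfolding S'_def by (rule inf_le2)
    have S'o: "openin (top_of_set U) S'"
      by (rule openin_subset_trans[OF S'I S'U UI])
    have hS'o: "openin (top_of_set L) (h ` S')"
      using homeomorphism_imp_open_map[OF hg S'o] .
    have ghz: "g (h z) = z" if "z \<in> S'" for z
      using homeomorphism_apply1[OF hg, of z] S'U that by blast
    have gh: "g ` h ` S' = S'"
    proof -
      have "(\<lambda>x. g (h x)) ` S' = (\<lambda>x. x) ` S'" by (rule image_cong[OF refl]) (rule ghz)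
      then show ?thesis by (simp add: image_image)
    qed
    have "openin (top_of_set W) ((p \<circ> g) ` (h ` S'))"
    proof (rule invariance_of_domain_subspaces[OF hS'o L(1) subW])
      show "dim W \<le> dim L" using dimW L by simp
      have hL: "h ` S' \<subseteq> L" using openin_imp_subset[OF hS'o] .
      have cg: "continuous_on (h ` S') g"
        using continuous_on_subset[OF homeomorphism_cont2[OF hg] hL] .
      have cp: "continuous_on (g ` h ` S') p" unfolding p_def by (rule proj_minus_cont)
      show "continuous_on (h ` S') (p \<circ> g)"
        using continuous_on_compose[OF cg cp] .
      show "p \<circ> g \<in> h ` S' \<rightarrow> W" using pW by auto
      show "inj_on (p \<circ> g) (h ` S')"
      proof (rule comp_inj_on)
        show "inj_on g (h ` S')"
        proof (rule inj_on_inverseI)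
          fix z assume "z \<in> h ` S'"
          then have "z \<in> L" using openin_imp_subset[OF hS'o] by blast
          then show "h (g z) = z" using homeomorphism_apply2[OF hg] by blast
        qed
        have "S' \<subseteq> M" using S'U openin_imp_subset[OF U(1)] by blast
        then show "inj_on p (g ` h ` S')" unfolding gh
          using inj_on_subset[OF injM] by blast
      qed
    qed
    moreover have "(p \<circ> g) ` (h ` S') = p ` S'" by (simp only: image_comp[symmetric] gh)
    ultimately have o1: "openin (top_of_set W) (p ` S')" by simp
    have "p ` S' \<subseteq> p ` I" using SI S'_def by auto
    moreover have "p ` I \<subseteq> W" using pW by auto
    ultimately have "openin (top_of_set (p ` I)) (p ` S')"
      using openin_subset_trans[OF o1] by blast
    moreover have "y \<in> p ` S'" using xS U(2) yx S'_def by auto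
    moreover have "p ` S' \<subseteq> p ` S" using S'_def by auto
    ultimately show "\<exists>T. openin (top_of_set (p ` I)) T \<and> y \<in> T \<and> T \<subseteq> p ` S" by blast
  qed
  have cont: "continuous_on I p" unfolding p_def by (rule proj_minus_cont)
  obtain h where "homeomorphism I (p ` I) p h"
    using homeomorphism_injective_open_map[OF cont refl injI oo] by blast
  then show ?thesis unfolding I_def p_def M_def k_def by blast
qed

end
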